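(* Let $\mathcal{A}$ be a union-closed family with base set $[n]$ and height $h$, and suppose $|\mathcal{A}|>1$. Then there exists an element of $[n]$ that is contained in at least $\frac{|\mathcal{A}|+h-3}{h-1}$ member sets of $\mathcal{A}$.
   Context: A family of sets $\mathcal{A}$ is union-closed if it is a finite family of distinct finite sets with at least one nonempty member set, and $X,Y\in\mathcal{A}$ implies $X\cup Y\in\mathcal{A}$ (the empty set may be a member). The base set $\bigcup_{A\in\mathcal{A}}A$ is denoted $[n]=\{1,\dots,n\}$. A chain in $\mathcal{A}$ is a subfamily any two distinct members of which are comparable under proper inclusion; the height $h$ of $\mathcal{A}$ is the maximum size of a chain in $\mathcal{A}$. *)

theory Defs
  imports Complex_Main
begin

definition union_closed :: "'a set set \<Rightarrow> bool" where
  "union_closed \<A> \<longleftrightarrow> finite \<A> \<and> (\<forall>X\<in>\<A>. finite X) \<and> (\<exists>X\<in>\<A>. X \<noteq> {})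
     \<and> (\<forall>X\<in>\<A>. \<forall>Y\<in>\<A>. X \<union> Y \<in> \<A>)"

definition is_chain_in :: "'a set set \<Rightarrow> 'a set set \<Rightarrow> bool" where
  "is_chain_in \<C> \<A> \<longleftrightarrow> \<C> \<subseteq> \<A> \<and> (\<forall>X\<in>\<C>. \<forall>Y\<in>\<C>. X \<noteq> Y \<longrightarrow> X \<subset> Y \<or> Y \<subset> X)"

definition height :: "'a set set \<Rightarrow> nat" where
  "height \<A> = Max {card \<C> | \<C>. is_chain_in \<C> \<A>}"

end

theory Submission
  imports Defs
begin

lemma union_mem:
  assumes "\<forall>X\<in>A. \<forall>Y\<in>A. X \<union> Y \<in> A" "finite F" "F \<noteq> {}" "F \<subseteq> A"
  shows "\<Union>F \<in> A"
  using assms(2,3,4)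
proof (induction F rule: finite_ne_induct)
  case (singleton x) then show ?case by simp
next
  case (insert x F) then show ?case using assms(1) by simp
qed

lemma chain2:
  assumes "\<forall>X\<in>A. \<forall>Y\<in>A. X \<union> Y \<in> A" "X \<in> A" "Y \<in> A" "X \<noteq> Y"
  shows "\<exists>C. is_chain_in C A \<and> card C = 2"
proof (cases "X \<union> Y = X")
  case True
  then have "Y \<subset> X" using assms by blast
  then show ?thesis using assms
    by (intro exI[of _ "{X,Y}"]) (auto simp: is_chain_in_def)
next
  case False
  then have "X \<subset> X \<union> Y" by blast
  then show ?thesis using assms False
    by (intro exI[of _ "{X,X \<union> Y}"]) (auto simp: is_chain_in_def)
qed

lemma arith1:
  fixes N b k c1 c2 :: real
  assumes "k \<ge> 3" "c1 \<ge> (b - 2)/(k - 2) + 2" "c2 \<ge> N - b"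
  shows "max c1 c2 \<ge> (N - 2)/(k - 1) + 1"
proof -
  define T where "T = (N - 2)/(k - 1) + 1"
  have eT: "(k - 1) * T = N + k - 3" using assms(1) unfolding T_def by (simp add: field_simps)
  have e1: "(k - 2) * c1 \<ge> b - 2 + 2*(k-2)" using assms(1,2)
    by (simp add: field_simps)
  show ?thesis unfolding T_def[symmetric]
  proof (rule ccontr)
    assume "\<not> max c1 c2 \<ge> T"
    then have a: "c1 < T" "c2 < T" by auto
    have "(k-2) * c1 < (k-2) * T" using a assms(1) by simp
    then show False using a assms eT e1 by (simp add: algebra_simps)
  qed
qed

lemma main:
  fixes A :: "'a set set"
  assumes "finite A" "\<forall>X\<in>A. \<forall>Y\<in>A. X \<union> Y \<in> A" "card A \<ge> 2" "k \<ge> 2"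
    "\<forall>C. is_chain_in C A \<longrightarrow> card C \<le> k"
  shows "\<exists>x\<in>\<Union>A. real (card {X\<in>A. x\<in>X}) \<ge> (real (card A) - 2)/(real k - 1) + 1"
  using assms
proof (induction "card A" arbitrary: A k rule: less_induct)
  case less
  note fin = less.prems(1) and uc = less.prems(2) and N2 = less.prems(3) and k2 = less.prems(4)
    and ch = less.prems(5)
  define U where "U = \<Union>A"
  have Ane: "A \<noteq> {}" using N2 by auto
  have UA: "U \<in> A" unfolding U_def using union_mem[OF uc fin Ane] by simp
  have "A - {U} \<noteq> {}"
  proof
    assume "A - {U} = {}"
    then have "A \<subseteq> {U}" by blast
    then have "card A \<le> 1" using card_mono[of "{U}" A] by simp
    then show False using N2 by simp
  qed
  then obtain S where S: "S \<in> A - {U}" and Smax: "\<forall>Z\<in>A - {U}. S \<subseteq> Z \<longrightarrow> S = Z"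
    using finite_has_maximal[of "A - {U}"] fin by blast
  have SU: "S \<subset> U" using S unfolding U_def by blast
  have key: "U - S \<subseteq> Z" if "Z \<in> A" "\<not> Z \<subseteq> S" for Z
  proof -
    have "Z \<union> S \<in> A" using uc that S by blast
    moreover have "S \<subseteq> Z \<union> S" "Z \<union> S \<noteq> S" using that by auto
    ultimately have "Z \<union> S = U" using Smax by blast
    then show ?thesis by blast
  qed
  define B where "B = {Z\<in>A. Z \<subseteq> S}"
  have BA: "B \<subseteq> A" unfolding B_def by auto
  have finB: "finite B" using BA fin finite_subset by blast
  have SB: "S \<in> B" using S unfolding B_def by auto
  have UB: "U \<notin> B" using SU unfolding B_def by auto
  have cardAB: "card (A - B) = card A - card B" using BA fin by (simp add: card_Diff_subset finB)
  have cardBA: "card B < card A" using BA UA UB fin by (intro psubset_card_mono) auto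
  obtain y where y: "y \<in> U - S" using SU by blast
  have "A - B \<subseteq> {X\<in>A. y\<in>X}" using key y unfolding B_def by auto
  then have "card (A - B) \<le> card {X\<in>A. y\<in>X}" by (rule card_mono[rotated]) (use fin in auto)
  then have cy: "card {X\<in>A. y\<in>X} \<ge> card A - card B" using cardAB by simp
  have yU: "y \<in> \<Union>A" using y U_def by auto
  show ?case
  proof (cases "card B \<le> 1")
    case True
    have "card B > 0" using SB finB card_gt_0_iff by blast
    then have "card B = 1" using True by linarith
    then have "real (card {X\<in>A. y\<in>X}) \<ge> real (card A) - 1" using cy N2 by linarith
    moreover have "real (card A) - 1 \<ge> (real (card A) - 2)/(real k - 1) + 1"
    proof -
      have "(real (card A) - 2)/(real k - 1) \<le> real (card A) - 2"
        using k2 N2 by (simp add: divide_le_eq mult_le_cancel_left1)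
      then show ?thesis by simp
    qed
    ultimately show ?thesis using yU by (meson order_trans)
  next
    case False
    then obtain X Y where XY: "X \<in> B" "Y \<in> B" "X \<noteq> Y"
      using card_le_Suc0_iff_eq[OF finB] by auto
    have ucB: "\<forall>X\<in>B. \<forall>Y\<in>B. X \<union> Y \<in> B" using uc unfolding B_def by auto
    have chB: "\<forall>C. is_chain_in C B \<longrightarrow> card C \<le> k - 1"
    proof (intro allI impI)
      fix C assume C: "is_chain_in C B"
      have CB: "C \<subseteq> B" using C is_chain_in_def by blast
      have finC: "finite C" using CB finB finite_subset by blast
      have UC: "U \<notin> C" using CB UB by blast
      have "is_chain_in (insert U C) A"
      proof -
        have "\<forall>Z\<in>C. Z \<subset> U" using CB SU unfolding B_def by blast
        then show ?thesis using C UA BA CB unfolding is_chain_in_def by blast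
      qed
      then have "card (insert U C) \<le> k" using ch by blast
      then show "card C \<le> k - 1" using finC UC by simp
    qed
    obtain C where C: "is_chain_in C B" "card C = 2" using chain2[OF ucB XY] by blast
    have k3: "k \<ge> 3" using chB C by fastforce
    have "\<exists>x\<in>\<Union>B. real (card {X\<in>B. x\<in>X}) \<ge> (real (card B) - 2)/(real (k-1) - 1) + 1"
      using less.hyps[OF cardBA finB ucB _ _ chB] False k3 by simp
    moreover have "real (k-1) - 1 = real k - 2" using k3 by (simp add: of_nat_diff)
    ultimately have "\<exists>x\<in>\<Union>B. real (card {X\<in>B. x\<in>X}) \<ge> (real (card B) - 2)/(real k - 2) + 1"
      by simp
    then obtain x where x: "x \<in> \<Union>B" and cx: "real (card {X\<in>B. x\<in>X}) \<ge> (real (card B) - 2)/(real k - 2) + 1"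
      by blast
    have xA: "x \<in> \<Union>A" using x BA by blast
    have xU: "x \<in> U" using xA U_def by simp
    have "insert U {X\<in>B. x\<in>X} \<subseteq> {X\<in>A. x\<in>X}" using BA UA xU by auto
    then have "card (insert U {X\<in>B. x\<in>X}) \<le> card {X\<in>A. x\<in>X}" using fin by (simp add: card_mono)
    moreover have "card (insert U {X\<in>B. x\<in>X}) = card {X\<in>B. x\<in>X} + 1" using UB finB by simp
    ultimately have cx2: "real (card {X\<in>A. x\<in>X}) \<ge> (real (card B) - 2)/(real k - 2) + 2"
      using cx k3 by (simp add: of_nat_diff)
    have cy2: "real (card {X\<in>A. y\<in>X}) \<ge> real (card A) - real (card B)"
      using cy cardBA by linarith
    have "max (real (card {X\<in>A. x\<in>X})) (real (card {X\<in>A. y\<in>X})) \<ge> (real (card A) - 2)/(real k - 1) + 1"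
      using arith1[OF _ cx2 cy2] k3 by simp
    then show ?thesis using xA yU by (auto simp: max_def split: if_splits)
  qed
qed

theorem theorem1p2:
  fixes \<A> :: "nat set set" and n h :: nat
  assumes "union_closed \<A>"
    and "\<Union>\<A> = {1..n}"
    and "h = height \<A>"
    and "card \<A> > 1"
  shows "\<exists>x\<in>{1..n}. real (card {X\<in>\<A>. x \<in> X}) \<ge> (real (card \<A>) + real h - 3) / (real h - 1)"
proof -
  have fin: "finite \<A>" and uc: "\<forall>X\<in>\<A>. \<forall>Y\<in>\<A>. X \<union> Y \<in> \<A>"
    using assms(1) unfolding union_closed_def by auto
  let ?S = "{card \<C> | \<C>. is_chain_in \<C> \<A>}"
  have finS: "finite ?S"
  proof (rule finite_subset[of _ "{..card \<A>}"])
    show "?S \<subseteq> {..card \<A>}" using fin by (auto simp: is_chain_in_def card_mono)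
  qed simp
  have chh: "\<forall>C. is_chain_in C \<A> \<longrightarrow> card C \<le> h"
    using assms(3) finS unfolding height_def by (auto intro: Max_ge)
  obtain X Y where XY: "X \<in> \<A>" "Y \<in> \<A>" "X \<noteq> Y" using assms(4)
    using card_le_Suc0_iff_eq[OF fin] by auto
  obtain C where "is_chain_in C \<A>" "card C = 2" using chain2[OF uc XY] by blast
  then have h2: "h \<ge> 2" using chh by fastforce
  obtain x where x: "x \<in> \<Union>\<A>" and cx: "real (card {X\<in>\<A>. x\<in>X}) \<ge> (real (card \<A>) - 2)/(real h - 1) + 1"
    using main[OF fin uc _ h2 chh] assms(4) by auto
  have "(real (card \<A>) - 2)/(real h - 1) + 1 = (real (card \<A>) + real h - 3) / (real h - 1)"
    using h2 by (simp add: field_simps)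
  then show ?thesis using x cx assms(2) by auto
qed

end
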